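(* Assume (A), (R), (S), let $c^{\mathrm{in}}\in\ell^1_1$, and for $N\in\mathbb N$ let $c^N$ be the unique nonnegative $C^1$ solution of the truncated system (T$_N$) with initial data $c^N_k(0)=c^{\mathrm{in}}_k$ for $k\le N$. Then for every $T>0$ and $k\in\mathbb N$ there is a constant $\mathscr C$, depending on $T$ and $k$ (and the data) but not on $N$, such that $$\Bigl\|\frac{d}{dt}c^N_k\Bigr\|_{L^1(0,T)}\le\mathscr C\quad\text{for all }N\ge k.$$
   Context: Standing assumptions on the coefficients ($\mathbb N=\{1,2,\dots\}$): (A) $a_{k,\ell}=a_{\ell,k}$ and $0\le a_{k,\ell}\le A_*(k^\alpha\ell^\beta+k^\beta\ell^\alpha)$ for all $k,\ell\in\mathbb N$, with constants $A_*>0$, $\alpha,\beta\in[0,1]$, $\alpha\le\beta$; (R) $r_k\ge R_*k^\gamma$ for all $k\in\mathbb N$, with $R_*>0$ and $\gamma>\max\{0,\alpha+\beta-1\}$; (S) $s_k\ge 0$ for all $k$, and for every $\mu\ge0$ there is $\mathfrak s_\mu>0$ with $\sum_{k\ge1}k^\mu s_k\le\mathfrak s_\mu$. $\ell^1_1$ is the set of sequences $(c_k)_{k\in\mathbb N}$ with $c_k\ge0$ and $\sum_k kc_k<\infty$. Truncated system (T$_N$): $\frac{d}{dt}c_k^N=\frac12\sum_{\ell=1}^{k-1}a_{k-\ell,\ell}c^N_{k-\ell}c^N_\ell-c^N_k\sum_{\ell=1}^{N-k}a_{k,\ell}c^N_\ell+s_k-r_kc^N_k$ for $k\le N$, and $c^N_k\equiv0$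 for $k>N$. *)

theory Defs
  imports "HOL-Analysis.Analysis"
begin

end

theory Submission
  imports Defs
begin

lemma ftc_c:
  fixes f f' :: "real \<Rightarrow> real"
  assumes d: "\<And>t. t \<ge> 0 \<Longrightarrow> (f has_real_derivative f' t) (at t within {0..})" and b: "0 \<le> b"
  shows "(f' has_integral (f b - f 0)) {0..b}"
proof (rule fundamental_theorem_of_calculus[OF b])
  fix x assume x: "x \<in> {0..b}"
  have "(f has_real_derivative f' x) (at x within {0..b})"
    by (rule DERIV_subset[OF d]) (use x in auto)
  then show "(f has_vector_derivative f' x) (at x within {0..b})"
    by (simp add: has_real_derivative_iff_has_vector_derivative)
qed

theorem mainTheorem10:
  fixes a :: "nat \<Rightarrow> nat \<Rightarrow> real" and r s cin :: "nat \<Rightarrow> real"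
    and Astar Rstar \<alpha> \<beta> \<gamma> :: real
    and c dc :: "nat \<Rightarrow> nat \<Rightarrow> real \<Rightarrow> real"
  assumes A_sym: "\<And>k l. k \<ge> 1 \<Longrightarrow> l \<ge> 1 \<Longrightarrow> a k l = a l k"
    and A_bound: "\<And>k l. k \<ge> 1 \<Longrightarrow> l \<ge> 1 \<Longrightarrow>
        0 \<le> a k l \<and> a k l \<le> Astar * (real k powr \<alpha> * real l powr \<beta> + real k powr \<beta> * real l powr \<alpha>)"
    and A_const: "Astar > 0" "0 \<le> \<alpha>" "\<alpha> \<le> \<beta>" "\<beta> \<le> 1"
    and R_bound: "\<And>k. k \<ge> 1 \<Longrightarrow> r k \<ge> Rstar * real k powr \<gamma>"
    and R_const: "Rstar > 0" "\<gamma> > max 0 (\<alpha> + \<beta> - 1)"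
    and S_nonneg: "\<And>k. k \<ge> 1 \<Longrightarrow> s k \<ge> 0"
    and S_moments: "\<And>\<mu>::real. \<mu> \<ge> 0 \<Longrightarrow>
        \<exists>S>0. \<forall>n. (\<Sum>k=1..n. real k powr \<mu> * s k) \<le> S"
    and cin_nonneg: "\<And>k. k \<ge> 1 \<Longrightarrow> cin k \<ge> 0"
    and cin_l11: "summable (\<lambda>k. real k * cin k)"
    and sol_nonneg: "\<And>N k t. N \<ge> 1 \<Longrightarrow> k \<ge> 1 \<Longrightarrow> t \<ge> 0 \<Longrightarrow> c N k t \<ge> 0"
    and sol_zero: "\<And>N k t. N \<ge> 1 \<Longrightarrow> k > N \<Longrightarrow> t \<ge> 0 \<Longrightarrow> c N k t = 0"
    and sol_init: "\<And>N k. N \<ge> 1 \<Longrightarrow> 1 \<le> k \<Longrightarrow> k \<le> N \<Longrightarrow> c N k 0 = cin k"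
    and sol_deriv: "\<And>N k t. N \<ge> 1 \<Longrightarrow> 1 \<le> k \<Longrightarrow> k \<le> N \<Longrightarrow> t \<ge> 0 \<Longrightarrow>
        (c N k has_real_derivative dc N k t) (at t within {0..})"
    and sol_C1: "\<And>N k. N \<ge> 1 \<Longrightarrow> 1 \<le> k \<Longrightarrow> k \<le> N \<Longrightarrow> continuous_on {0..} (dc N k)"
    and sol_eq: "\<And>N k t. N \<ge> 1 \<Longrightarrow> 1 \<le> k \<Longrightarrow> k \<le> N \<Longrightarrow> t \<ge> 0 \<Longrightarrow>
        dc N k t = 1/2 * (\<Sum>l=1..k-1. a (k-l) l * c N (k-l) t * c N l t)
                   - c N k t * (\<Sum>l=1..N-k. a k l * c N l t) + s k - r k * c N k t"
  shows "\<forall>T>0. \<forall>k\<ge>1. \<exists>C. \<forall>N\<ge>k. integral {0..T} (\<lambda>t. \<bar>dc N k t\<bar>) \<le> C"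
proof (intro allI impI)
  fix T :: real and k :: nat
  assume T: "T > 0" and k: "k \<ge> 1"
  define gain where "gain N j t = 1/2 * (\<Sum>l=1..j-1. a (j-l) l * c N (j-l) t * c N l t)" for N j t
  have rpos: "r j \<ge> 0" if "j \<ge> 1" for j
  proof -
    have "Rstar * real j powr \<gamma> \<ge> 0" using R_const by simp
    then show ?thesis using R_bound[OF that] by linarith
  qed
  have gain_nonneg: "gain N j t \<ge> 0" if "N \<ge> 1" "t \<ge> 0" for N j t
    unfolding gain_def
    by (intro mult_nonneg_nonneg sum_nonneg) (use that A_bound sol_nonneg in auto)
  have loss_nonneg: "c N j t * (\<Sum>l=1..N-j. a j l * c N l t) \<ge> 0"
    if "N \<ge> 1" "t \<ge> 0" "j \<ge> 1" for N j t
    by (intro mult_nonneg_nonneg sum_nonneg) (use that A_bound sol_nonneg in auto)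
  have gain_bd: "\<exists>G. \<forall>N\<ge>j. \<forall>t\<in>{0..T}. gain N j t \<le> G"
    if j: "j \<ge> 1" and hyp: "\<And>l. 1 \<le> l \<Longrightarrow> l < j \<Longrightarrow> \<exists>B. \<forall>N\<ge>l. \<forall>t\<in>{0..T}. c N l t \<le> B" for j
  proof -
    have "\<forall>l. \<exists>B. 1 \<le> l \<longrightarrow> l < j \<longrightarrow> (\<forall>N\<ge>l. \<forall>t\<in>{0..T}. c N l t \<le> B)"
      using hyp by blast
    then obtain Bf where Bf: "\<And>l N t. 1 \<le> l \<Longrightarrow> l < j \<Longrightarrow> N \<ge> l \<Longrightarrow> t \<in> {0..T} \<Longrightarrow> c N l t \<le> Bf l"
      by metis
    show ?thesis
    proof (intro exI allI impI ballI)
      fix N t assume N: "N \<ge> j" and t: "t \<in> {0..T}"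
      have "(\<Sum>l=1..j-1. a (j-l) l * c N (j-l) t * c N l t) \<le> (\<Sum>l=1..j-1. a (j-l) l * Bf (j-l) * Bf l)"
      proof (rule sum_mono)
        fix l assume l: "l \<in> {1..j-1}"
        have a0: "a (j-l) l \<ge> 0" using A_bound l by auto
        have c1: "0 \<le> c N (j-l) t" "c N (j-l) t \<le> Bf (j-l)"
          using sol_nonneg[of N "j-l" t] Bf[of "j-l" N t] l N j t by auto
        have c2: "0 \<le> c N l t" "c N l t \<le> Bf l"
          using sol_nonneg[of N l t] Bf[of l N t] l N j t by auto
        have "a (j-l) l * c N (j-l) t \<le> a (j-l) l * Bf (j-l)"
          using a0 c1 by (simp add: mult_left_mono)
        moreover have "0 \<le> a (j-l) l * c N (j-l) t" using a0 c1 by simp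
        ultimately show "a (j-l) l * c N (j-l) t * c N l t \<le> a (j-l) l * Bf (j-l) * Bf l"
          using c2 by (meson mult_mono order_trans)
      qed
      then show "gain N j t \<le> 1/2 * (\<Sum>l=1..j-1. a (j-l) l * Bf (j-l) * Bf l)"
        unfolding gain_def by simp
    qed
  qed
  have dc_le: "dc N j t \<le> gain N j t + s j" if "N \<ge> j" "j \<ge> 1" "t \<ge> 0" for N j t
  proof -
    have "dc N j t = gain N j t - c N j t * (\<Sum>l=1..N-j. a j l * c N l t) + s j - r j * c N j t"
      using sol_eq[of N j t] that unfolding gain_def by simp
    moreover have "c N j t * (\<Sum>l=1..N-j. a j l * c N l t) \<ge> 0" using loss_nonneg that by simp
    moreover have "r j * c N j t \<ge> 0" using rpos sol_nonneg that by simp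
    ultimately show ?thesis by linarith
  qed
  have cbd: "\<exists>B. \<forall>N\<ge>j. \<forall>t\<in>{0..T}. c N j t \<le> B" if "j \<ge> 1" for j
    using that
  proof (induction j rule: less_induct)
    case (less j)
    have "\<exists>G. \<forall>N\<ge>j. \<forall>t\<in>{0..T}. gain N j t \<le> G"
      by (rule gain_bd[OF less.prems], rule less.IH) auto
    then obtain G where G: "\<And>N t. N \<ge> j \<Longrightarrow> t \<in> {0..T} \<Longrightarrow> gain N j t \<le> G"
      by blast
    show ?case
    proof (intro exI allI impI ballI)
      fix N t assume N: "N \<ge> j" and t: "t \<in> {0..T}"
      have i1: "(dc N j has_integral (c N j t - c N j 0)) {0..t}"
        by (rule ftc_c) (use sol_deriv N less.prems t in auto)
      have i2: "((\<lambda>x. G + s j) has_integral (t * (G + s j))) {0..t}"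
        using has_integral_const_real[of "G + s j" 0 t] t by simp
      have "c N j t - c N j 0 \<le> t * (G + s j)"
      proof (rule has_integral_le[OF i1 i2])
        fix x assume x: "x \<in> {0..t}"
        have "dc N j x \<le> gain N j x + s j" using dc_le[of j N x] N less.prems x by auto
        moreover have "gain N j x \<le> G" using G[of N x] N x t by auto
        ultimately show "dc N j x \<le> G + s j" by linarith
      qed
      also have "\<dots> \<le> t * max 0 (G + s j)"
        using t by (intro mult_left_mono) auto
      also have "\<dots> \<le> T * max 0 (G + s j)"
        using t by (intro mult_right_mono) auto
      finally show "c N j t \<le> cin j + T * max 0 (G + s j)"
        using sol_init[of N j] N less.prems by simp
    qed
  qed
  obtain G where G: "\<And>N t. N \<ge> k \<Longrightarrow> t \<in> {0..T} \<Longrightarrow> gain N k t \<le> G"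
  proof -
    have "\<exists>G. \<forall>N\<ge>k. \<forall>t\<in>{0..T}. gain N k t \<le> G"
      by (rule gain_bd[OF k], rule cbd) auto
    then show ?thesis using that by blast
  qed
  show "\<exists>C. \<forall>N\<ge>k. integral {0..T} (\<lambda>t. \<bar>dc N k t\<bar>) \<le> C"
  proof (intro exI allI impI)
    fix N assume N: "N \<ge> k"
    have N1: "N \<ge> 1" using N k by simp
    have cont: "continuous_on {0..T} (\<lambda>t. \<bar>dc N k t\<bar>)"
      by (intro continuous_intros continuous_on_subset[OF sol_C1[OF N1 k N]]) auto
    have i0: "((\<lambda>t. \<bar>dc N k t\<bar>) has_integral integral {0..T} (\<lambda>t. \<bar>dc N k t\<bar>)) {0..T}"
      using integrable_continuous_interval[OF cont] by (rule integrable_integral)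
    have i1: "(dc N k has_integral (c N k T - c N k 0)) {0..T}"
      by (rule ftc_c) (use sol_deriv N k T in auto)
    have i2: "((\<lambda>x. 2 * (G + s k)) has_integral (T * (2 * (G + s k)))) {0..T}"
      using has_integral_const_real[of "2 * (G + s k)" 0 T] T by simp
    have i3: "((\<lambda>x. 2 * (G + s k) - dc N k x) has_integral
        (T * (2 * (G + s k)) - (c N k T - c N k 0))) {0..T}"
      by (rule has_integral_diff[OF i2 i1])
    have "integral {0..T} (\<lambda>t. \<bar>dc N k t\<bar>) \<le> T * (2 * (G + s k)) - (c N k T - c N k 0)"
    proof (rule has_integral_le[OF i0 i3])
      fix x assume x: "x \<in> {0..T}"
      have g: "gain N k x \<le> G" "gain N k x \<ge> 0" using G[OF N x] gain_nonneg[OF N1] x by auto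
      have "dc N k x \<le> gain N k x + s k" using dc_le N k x by auto
      moreover have "s k \<ge> 0" using S_nonneg k by simp
      ultimately show "\<bar>dc N k x\<bar> \<le> 2 * (G + s k) - dc N k x" using g by (simp add: abs_if)
    qed
    also have "\<dots> \<le> T * (2 * (G + s k)) + cin k"
      using T sol_init[OF N1 k N] sol_nonneg[OF N1 k, of T] by simp
    finally show "integral {0..T} (\<lambda>t. \<bar>dc N k t\<bar>) \<le> T * (2 * (G + s k)) + cin k" .
  qed
qed

end
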